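(* Let $k\ge1$, let $\Gamma=\mathbb{Z}_2\,\mathrm{wr}\,\mathbb{Z}^k=\Sigma\rtimes_\alpha\mathbb{Z}^k$ with $\Sigma=\bigoplus_{x\in\mathbb{Z}^k}(\mathbb{Z}_2)_{(x)}$, and let $\phi:\Gamma\to\Gamma$ be an automorphism, with restriction $\phi'=\phi|_\Sigma:\Sigma\to\Sigma$. Write $\phi'(\delta_0)=\delta_{x(1)}+\dots+\delta_{x(n)}$ with distinct $x(1),\dots,x(n)\in\mathbb{Z}^k$. Then $n=1$. Moreover, $\phi'$ permutes the set $\{\delta_x : x\in\mathbb{Z}^k\}$.
   Context: $\mathbb{Z}_2\,\mathrm{wr}\,\mathbb{Z}^k$ is the semidirect product $\Sigma\rtimes_\alpha\mathbb{Z}^k$, where $\Sigma=\bigoplus_{x\in\mathbb{Z}^k}(\mathbb{Z}_2)_{(x)}$ (finitely supported), each $(\mathbb{Z}_2)_{(x)}\cong\mathbb{Z}_2$ has nontrivial element $\delta_x$, and $\alpha(y)(\delta_x)=\delta_{y+x}$ for $y\in\mathbb{Z}^k$. The subgroup $\Sigma$ is the torsion subgroup of $\Gamma$, hence characteristic, so $\phi(\Sigma)=\Sigma$. *)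

theory Defs
  imports "HOL-Analysis.Finite_Cartesian_Product" "HOL-Algebra.Group"
begin

text \<open>Z^k is int ^ 'n for a finite index type 'n
  (k = CARD('n) \<ge> 1).  An element of Sigma = finitely supported Z_2-valued functions on Z^k
  is represented by its (finite) support set; addition in Sigma is symmetric difference.
  An element of Gamma is a pair (s, y) with s in Sigma and y in Z^k, and
  (s, y) (t, z) = (s + alpha(y) t, y + z), where alpha(y) translates supports by y.\<close>

type_synonym 'n lamp = "(int ^ 'n) set \<times> (int ^ 'n)"

definition symdiff :: "'a set \<Rightarrow> 'a set \<Rightarrow> 'a set" where
  "symdiff A B = (A - B) \<union> (B - A)"

definition lamplighter :: "('n::finite lamp) monoid" where
  "lamplighter = \<lparr> carrier = {p. finite (fst p)},
     mult = (\<lambda>a b. (symdiff (fst a) ((\<lambda>x. snd a + x) ` fst b), snd a + snd b)),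
     one = ({}, 0) \<rparr>"

definition delta :: "int ^ 'n \<Rightarrow> 'n::finite lamp" where
  "delta x = ({x}, 0)"

end

theory Submission
  imports Defs "HOL-Library.List_Lexorder"
begin

definition enumn :: "'n::finite list" where
  "enumn = (SOME xs. distinct xs \<and> set xs = UNIV)"

lemma enumn_set: "set (enumn :: 'n::finite list) = UNIV"
proof -
  have "\<exists>xs::'n list. distinct xs \<and> set xs = UNIV"
    using finite_distinct_list[of "UNIV::'n set"] by auto
  then show ?thesis unfolding enumn_def by (metis (mono_tags, lifting) someI_ex)
qed

definition key :: "int ^ 'n::finite \<Rightarrow> int list" where
  "key v = map (\<lambda>i. v $ i) enumn"

lemma key_inj: "key v = key w \<Longrightarrow> v = w"
  unfolding key_def by (simp add: map_eq_conv enumn_set vec_eq_iff)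

lemma map_less_add:
  fixes v u w :: "int ^ 'n::finite"
  shows
  "map (\<lambda>i. (v + u) $ i) xs < map (\<lambda>i. (w + u) $ i) xs
   \<longleftrightarrow> map (\<lambda>i. v $ i) xs < map (\<lambda>i. w $ i) xs"
  by (induction xs) auto

lemma key_less_add: "key (v + u) < key (w + u) \<longleftrightarrow> key v < key w"
  unfolding key_def by (rule map_less_add)

lemma key_le_add: "key (v + u) \<le> key (w + u) \<longleftrightarrow> key v \<le> key w"
proof -
  have "key (v+u) = key (w+u) \<longleftrightarrow> key v = key w"
    using key_inj[of v w] key_inj[of "v+u" "w+u"] by (metis add_right_cancel)
  then show ?thesis by (simp add: order_le_less key_less_add)
qed

lemma key_sum:
  assumes "key a \<le> key a0" "key b \<le> key b0" "key (a + b) = key (a0 + b0)"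
  shows "a = a0 \<and> b = b0"
proof -
  have 1: "key (a + b) \<le> key (a0 + b)" using assms(1) key_le_add by blast
  have 2: "key (a0 + b) \<le> key (a0 + b0)"
    using assms(2) key_le_add[of b a0 b0] by (simp add: add.commute)
  have "key (a + b) = key (a0 + b)" using 1 2 assms(3) by simp
  then have "a = a0" using key_inj by force
  moreover have "key (a0 + b) = key (a0 + b0)" using 1 2 assms(3) by simp
  then have "b = b0" using key_inj by force
  ultimately show ?thesis by simp
qed

lemma ex_max:
  assumes "finite S" "S \<noteq> {}"
  obtains m where "m \<in> S" "\<forall>x\<in>S. f x \<le> (f m :: int list)"
proof -
  have "Max (f ` S) \<in> f ` S" using assms by simp
  then obtain m where "m \<in> S" "f m = Max (f ` S)" by auto
  then show ?thesis using that assms by simp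
qed

lemma ex_min:
  assumes "finite S" "S \<noteq> {}"
  obtains m where "m \<in> S" "\<forall>x\<in>S. f m \<le> (f x :: int list)"
proof -
  have "Min (f ` S) \<in> f ` S" using assms by simp
  then obtain m where "m \<in> S" "f m = Min (f ` S)" by auto
  then show ?thesis using that assms by simp
qed

lemma unit_lemma:
  fixes B :: "int ^ 'n::finite \<Rightarrow> int ^ 'n"
  assumes fs: "finite s" and inj: "inj B" and fP: "finite P"
    and eq: "{z. odd (card {a\<in>s. z - B a \<in> P})} = {0}"
  shows "card P = 1"
proof -
  have "0 \<in> {z. odd (card {a\<in>s. z - B a \<in> P})}" using eq by simp
  then have od: "odd (card {a\<in>s. 0 - B a \<in> P})" by simp
  have ne: "{a\<in>s. 0 - B a \<in> P} \<noteq> {}"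
  proof
    assume e0: "{a\<in>s. 0 - B a \<in> P} = {}"
    from od show False unfolding e0 by simp
  qed
  then obtain a1 where a1: "a1 \<in> s" "0 - B a1 \<in> P" by blast
  then have sne: "s \<noteq> {}" and Pne: "P \<noteq> {}" by auto
  obtain aM where aM: "aM \<in> s" "\<forall>a\<in>s. key (B a) \<le> key (B aM)"
    using ex_max[OF fs sne, of "\<lambda>a. key (B a)"] by blast
  obtain bM where bM: "bM \<in> P" "\<forall>b\<in>P. key b \<le> key bM"
    using ex_max[OF fP Pne, of key] by blast
  obtain am where am: "am \<in> s" "\<forall>a\<in>s. key (B am) \<le> key (B a)"
    using ex_min[OF fs sne, of "\<lambda>a. key (B a)"] by blast
  obtain bm where bm: "bm \<in> P" "\<forall>b\<in>P. key bm \<le> key b"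
    using ex_min[OF fP Pne, of key] by blast
  have c1: "{a\<in>s. (B aM + bM) - B a \<in> P} = {aM}"
  proof
    show "{aM} \<subseteq> {a\<in>s. (B aM + bM) - B a \<in> P}" using aM(1) bM(1) by simp
    show "{a\<in>s. (B aM + bM) - B a \<in> P} \<subseteq> {aM}"
    proof
      fix a assume "a \<in> {a\<in>s. (B aM + bM) - B a \<in> P}"
      then have a: "a \<in> s" "(B aM + bM) - B a \<in> P" by auto
      have k: "key (B a + ((B aM + bM) - B a)) = key (B aM + bM)" by simp
      have l1: "key (B a) \<le> key (B aM)" using aM(2) a(1) by blast
      have l2: "key ((B aM + bM) - B a) \<le> key bM" using bM(2) a(2) by blast
      have "B a = B aM" using key_sum[OF l1 l2 k] by blast
      then show "a \<in> {aM}" using inj by (simp add: inj_eq)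
    qed
  qed
  have "B aM + bM \<in> {z. odd (card {a\<in>s. z - B a \<in> P})}" using c1 by simp
  then have z1: "B aM + bM = 0" using eq by simp
  have c2: "{a\<in>s. (B am + bm) - B a \<in> P} = {am}"
  proof
    show "{am} \<subseteq> {a\<in>s. (B am + bm) - B a \<in> P}" using am(1) bm(1) by simp
    show "{a\<in>s. (B am + bm) - B a \<in> P} \<subseteq> {am}"
    proof
      fix a assume "a \<in> {a\<in>s. (B am + bm) - B a \<in> P}"
      then have a: "a \<in> s" "(B am + bm) - B a \<in> P" by auto
      have k: "key (B am + bm) = key (B a + ((B am + bm) - B a))" by simp
      have l1: "key (B am) \<le> key (B a)" using am(2) a(1) by blast
      have l2: "key bm \<le> key ((B am + bm) - B a)" using bm(2) a(2) by blast
      have "B am = B a" using key_sum[OF l1 l2 k] by blast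
      then show "a \<in> {am}" using inj by (simp add: inj_eq)
    qed
  qed
  have "B am + bm \<in> {z. odd (card {a\<in>s. z - B a \<in> P})}" using c2 by simp
  then have z2: "B am + bm = 0" using eq by simp
  have k: "key (B am + bm) = key (B aM + bM)" using z1 z2 by simp
  have l1: "key (B am) \<le> key (B aM)" using aM(2) am(1) by blast
  have l2: "key bm \<le> key bM" using bM(2) bm(1) by blast
  have bb: "bm = bM" using key_sum[OF l1 l2 k] by blast
  have "\<forall>b\<in>P. b = bM"
  proof
    fix b assume b: "b \<in> P"
    have "key bm \<le> key b" using bm(2) b by blast
    moreover have "key b \<le> key bM" using bM(2) b by blast
    ultimately have "key b = key bM" using bb by simp
    then show "b = bM" by (rule key_inj)
  qed
  then have "P = {bM}" using bM(1) by blast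
  then show ?thesis by simp
qed

lemma LL_mult: "x \<otimes>\<^bsub>lamplighter\<^esub> y = (symdiff (fst x) ((\<lambda>z. snd x + z) ` fst y), snd x + snd y)"
  by (simp add: lamplighter_def)

lemma LL_carrier: "x \<in> carrier lamplighter \<longleftrightarrow> finite (fst x)"
  by (simp add: lamplighter_def)

lemma LL_closed: "x \<in> carrier lamplighter \<Longrightarrow> y \<in> carrier lamplighter
   \<Longrightarrow> x \<otimes>\<^bsub>lamplighter\<^esub> y \<in> carrier lamplighter"
  by (simp add: LL_mult LL_carrier symdiff_def)

lemma symdiff_cancel: "symdiff u X = symdiff D u \<Longrightarrow> D = X"
  unfolding symdiff_def by blast

lemma symdiff_self: "symdiff u u = {}"
  unfolding symdiff_def by blast

lemma dbl0: "(y::int^'n::finite) + y = 0 \<Longrightarrow> y = 0"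
proof -
  assume "y + y = 0"
  then have "\<forall>i. y $ i + y $ i = 0" by (simp add: vec_eq_iff)
  then show "y = 0" by (simp add: vec_eq_iff)
qed

lemma image_transl: "(z \<in> (\<lambda>x. b + x) ` P) \<longleftrightarrow> z - b \<in> (P :: (int^'n::finite) set)"
proof
  assume "z \<in> (\<lambda>x. b + x) ` P" then show "z - b \<in> P" by auto
next
  assume "z - b \<in> P"
  then have "b + (z - b) \<in> (\<lambda>x. b + x) ` P" by blast
  then show "z \<in> (\<lambda>x. b + x) ` P" by simp
qed

lemma sd_step:
  fixes B :: "int^'n::finite \<Rightarrow> int^'n"
  assumes fs: "finite s" and ns: "a \<notin> s"
  shows "symdiff ((\<lambda>x. B a + x) ` P) {z. odd (card {a\<in>s. z - B a \<in> P})}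
          = {z. odd (card {x\<in>insert a s. z - B x \<in> P})}"
proof (rule Set.set_eqI)
  fix z
  define C where "C = {x\<in>s. z - B x \<in> P}"
  have fin: "finite C" using fs unfolding C_def by simp
  have aC: "a \<notin> C" using ns unfolding C_def by simp
  have iff: "z \<in> (\<lambda>x. B a + x) ` P \<longleftrightarrow> z - B a \<in> P" by (rule image_transl)
  have L: "z \<in> symdiff ((\<lambda>x. B a + x) ` P) {z. odd (card {a\<in>s. z - B a \<in> P})}
     \<longleftrightarrow> (z - B a \<in> P) \<noteq> odd (card C)"
    unfolding symdiff_def C_def using iff by blast
  show "z \<in> symdiff ((\<lambda>x. B a + x) ` P) {z. odd (card {a\<in>s. z - B a \<in> P})}
          \<longleftrightarrow> z \<in> {z. odd (card {x\<in>insert a s. z - B x \<in> P})}"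
  proof (cases "z - B a \<in> P")
    case True
    then have "{x\<in>insert a s. z - B x \<in> P} = insert a C" unfolding C_def by blast
    then have "card {x\<in>insert a s. z - B x \<in> P} = Suc (card C)" using fin aC by simp
    then show ?thesis using L True by simp
  next
    case False
    then have "{x\<in>insert a s. z - B x \<in> P} = C" unfolding C_def by blast
    then show ?thesis using L False by simp
  qed
qed

theorem lemma2p1:
  fixes \<phi> :: "'n::finite lamp \<Rightarrow> 'n lamp"
  assumes "\<phi> \<in> iso lamplighter lamplighter"
  shows "card (fst (\<phi> (delta 0))) = 1 \<and> snd (\<phi> (delta 0)) = 0
         \<and> bij_betw \<phi> (range delta) (range delta)"
proof -
  have cl: "\<And>x. x \<in> carrier lamplighter \<Longrightarrow> \<phi> x \<in> carrier lamplighter"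
    and mul: "\<And>x y. x \<in> carrier lamplighter \<Longrightarrow> y \<in> carrier lamplighter \<Longrightarrow>
       \<phi> (x \<otimes>\<^bsub>lamplighter\<^esub> y) = \<phi> x \<otimes>\<^bsub>lamplighter\<^esub> \<phi> y"
    and bij: "bij_betw \<phi> (carrier lamplighter) (carrier lamplighter)"
    using assms unfolding iso_def hom_def by auto
  have inj: "\<And>x y. x \<in> carrier lamplighter \<Longrightarrow> y \<in> carrier lamplighter \<Longrightarrow> \<phi> x = \<phi> y \<Longrightarrow> x = y"
    using bij by (meson bij_betw_imp_inj_on inj_onD)
  have sur: "\<And>y. y \<in> carrier lamplighter \<Longrightarrow> \<exists>x\<in>carrier lamplighter. \<phi> x = y"
    using bij by (metis bij_betw_imp_surj_on imageE)
  have c1: "(({}, 0) :: 'n lamp) \<in> carrier lamplighter" by (simp add: LL_carrier)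
  have one: "\<phi> ({}, 0) = ({}, 0)"
  proof -
    obtain u b where ub: "\<phi> ({}, 0) = (u, b)" by fastforce
    have "(({}, 0) :: 'n lamp) \<otimes>\<^bsub>lamplighter\<^esub> ({}, 0) = ({}, 0)"
      by (simp add: LL_mult symdiff_def)
    then have "\<phi> ({}, 0) \<otimes>\<^bsub>lamplighter\<^esub> \<phi> ({}, 0) = \<phi> ({}, 0)" using mul[OF c1 c1] by simp
    then have e: "(u, b) \<otimes>\<^bsub>lamplighter\<^esub> (u, b) = (u, b)" using ub by simp
    then have e12: "symdiff u ((\<lambda>z. b + z) ` u) = u \<and> b + b = b"
      unfolding LL_mult by (simp only: fst_conv snd_conv prod.inject)
    then have e1: "symdiff u ((\<lambda>z. b + z) ` u) = u" and e2: "b + b = b" by auto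
    from e2 have "b = 0" by simp
    from e1 have "symdiff u u = u" unfolding \<open>b = 0\<close> by simp
    then have "u = {}" by (simp add: symdiff_self)
    with ub \<open>b = 0\<close> show ?thesis by simp
  qed
  have sq: "\<And>g::'n lamp. g \<otimes>\<^bsub>lamplighter\<^esub> g = ({}, 0) \<longleftrightarrow> snd g = 0"
  proof -
    fix g :: "'n lamp"
    show "g \<otimes>\<^bsub>lamplighter\<^esub> g = ({}, 0) \<longleftrightarrow> snd g = 0"
    proof
      assume "g \<otimes>\<^bsub>lamplighter\<^esub> g = ({}, 0)"
      then have "snd g + snd g = 0" by (simp add: LL_mult)
      then show "snd g = 0" by (rule dbl0)
    next
      assume "snd g = 0"
      then show "g \<otimes>\<^bsub>lamplighter\<^esub> g = ({}, 0)" by (simp add: LL_mult symdiff_self)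
    qed
  qed
  have ord: "\<And>g. g \<in> carrier lamplighter \<Longrightarrow> snd (\<phi> g) = 0 \<longleftrightarrow> snd g = 0"
  proof -
    fix g :: "'n lamp" assume g: "g \<in> carrier lamplighter"
    show "snd (\<phi> g) = 0 \<longleftrightarrow> snd g = 0"
    proof
      assume "snd (\<phi> g) = 0"
      then have "\<phi> (g \<otimes>\<^bsub>lamplighter\<^esub> g) = \<phi> ({}, 0)" using mul[OF g g] sq one by simp
      then have "g \<otimes>\<^bsub>lamplighter\<^esub> g = ({}, 0)" using inj[OF LL_closed[OF g g] c1] by simp
      then show "snd g = 0" using sq by simp
    next
      assume "snd g = 0"
      then have "g \<otimes>\<^bsub>lamplighter\<^esub> g = ({}, 0)" using sq by blast
      then have "\<phi> g \<otimes>\<^bsub>lamplighter\<^esub> \<phi> g = ({}, 0)" using mul[OF g g] one by simp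
      then show "snd (\<phi> g) = 0" using sq[of "\<phi> g"] by blast
    qed
  qed
  define P where "P = fst (\<phi> (delta 0))"
  define B where "B = (\<lambda>a. snd (\<phi> ({}, a)))"
  have dc: "\<And>a. delta a \<in> carrier lamplighter" by (simp add: LL_carrier delta_def)
  have tc: "\<And>a. (({}, a) :: 'n lamp) \<in> carrier lamplighter" by (simp add: LL_carrier)
  have d0: "\<phi> (delta 0) = (P, 0)"
    using ord[OF dc[of 0]] P_def by (simp add: delta_def prod_eq_iff)
  have fP: "finite P" using cl[OF dc[of 0]] d0 by (simp add: LL_carrier)
  have conj: "\<And>a. \<phi> (delta a) = ((\<lambda>x. B a + x) ` P, 0)"
  proof -
    fix a :: "int^'n"
    have "(({}, a) :: 'n lamp) \<otimes>\<^bsub>lamplighter\<^esub> delta 0 = delta a \<otimes>\<^bsub>lamplighter\<^esub> ({}, a)"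
      by (simp add: LL_mult delta_def symdiff_def)
    then have e: "\<phi> ({}, a) \<otimes>\<^bsub>lamplighter\<^esub> \<phi> (delta 0) = \<phi> (delta a) \<otimes>\<^bsub>lamplighter\<^esub> \<phi> ({}, a)"
    proof -
      have "\<phi> (({}, a) \<otimes>\<^bsub>lamplighter\<^esub> delta 0) = \<phi> (delta a \<otimes>\<^bsub>lamplighter\<^esub> ({}, a))"
        using \<open>(({}, a) :: 'n lamp) \<otimes>\<^bsub>lamplighter\<^esub> delta 0 = delta a \<otimes>\<^bsub>lamplighter\<^esub> ({}, a)\<close>
        by (rule arg_cong)
      then show ?thesis using mul[OF tc dc] mul[OF dc tc] by simp
    qed
    have sD: "snd (\<phi> (delta a)) = 0" using ord[OF dc[of a]] by (simp add: delta_def)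
    define D where "D = fst (\<phi> (delta a))"
    have D: "\<phi> (delta a) = (D, 0)" using sD unfolding D_def by (simp add: prod_eq_iff)
    define u where "u = fst (\<phi> ({}, a))"
    have u: "\<phi> ({}, a) = (u, B a)" unfolding u_def B_def by simp
    have "symdiff u ((\<lambda>x. B a + x) ` P) = symdiff D u"
      using e D u d0 by (simp add: LL_mult)
    then have "D = (\<lambda>x. B a + x) ` P" by (rule symdiff_cancel)
    then show "\<phi> (delta a) = ((\<lambda>x. B a + x) ` P, 0)" using D by simp
  qed
  have F: "\<And>s. finite s \<Longrightarrow> \<phi> (s, 0) = ({z. odd (card {a\<in>s. z - B a \<in> P})}, 0)"
  proof -
    fix s :: "(int^'n) set"
    assume "finite s"
    then show "\<phi> (s, 0) = ({z. odd (card {a\<in>s. z - B a \<in> P})}, 0)"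
    proof (induction s rule: finite_induct)
      case empty
      then show ?case using one by simp
    next
      case (insert a s)
      have sc: "((s, 0) :: 'n lamp) \<in> carrier lamplighter" using insert by (simp add: LL_carrier)
      have "((insert a s, 0) :: 'n lamp) = delta a \<otimes>\<^bsub>lamplighter\<^esub> (s, 0)"
        using insert by (auto simp: LL_mult delta_def symdiff_def)
      then have "\<phi> (insert a s, 0) = \<phi> (delta a) \<otimes>\<^bsub>lamplighter\<^esub> \<phi> (s, 0)"
        using mul[OF dc sc] by simp
      also have "\<dots> = (symdiff ((\<lambda>x. B a + x) ` P) {z. odd (card {a\<in>s. z - B a \<in> P})}, 0)"
        using conj insert by (simp add: LL_mult)
      also have "\<dots> = ({z. odd (card {x\<in>insert a s. z - B x \<in> P})}, 0)"
        using sd_step[OF insert(1,2), of B P] by simp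
      finally show ?case .
    qed
  qed
  have Bsnd: "\<And>g. g \<in> carrier lamplighter \<Longrightarrow> snd (\<phi> g) = B (snd g)"
  proof -
    fix g :: "'n lamp" assume g: "g \<in> carrier lamplighter"
    have gc: "((fst g, 0) :: 'n lamp) \<in> carrier lamplighter" using g by (simp add: LL_carrier)
    have geq: "g = (fst g, 0) \<otimes>\<^bsub>lamplighter\<^esub> ({}, snd g)"
      by (simp add: LL_mult symdiff_def)
    have "\<phi> g = \<phi> (fst g, 0) \<otimes>\<^bsub>lamplighter\<^esub> \<phi> ({}, snd g)"
      using arg_cong[OF geq, of \<phi>] mul[OF gc tc[of "snd g"]] by (rule trans)
    moreover have "snd (\<phi> (fst g, 0)) = 0" using ord[OF gc] by simp
    ultimately show "snd (\<phi> g) = B (snd g)" by (simp add: LL_mult B_def)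
  qed
  have Bsurj: "\<And>z. \<exists>y. B y = z"
  proof -
    fix z
    obtain g where g: "g \<in> carrier lamplighter" "\<phi> g = ({}, z)" using sur[OF tc] by blast
    show "\<exists>y. B y = z" using Bsnd[OF g(1)] g(2) by auto
  qed
  have Binj: "inj B"
  proof (rule injI)
    fix a a' assume eq: "B a = B a'"
    define u where "u = fst (\<phi> ({}, a))"
    have u: "\<phi> ({}, a) = (u, B a)" unfolding u_def B_def by simp
    define u' where "u' = fst (\<phi> ({}, a'))"
    have u': "\<phi> ({}, a') = (u', B a')" unfolding u'_def B_def by simp
    have fu: "finite u" "finite u'" using cl[OF tc[of a]] cl[OF tc[of a']] u u' by (auto simp: LL_carrier)
    have Xc: "((symdiff u u', 0) :: 'n lamp) \<in> carrier lamplighter"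
      using fu by (simp add: LL_carrier symdiff_def)
    obtain g where g: "g \<in> carrier lamplighter" "\<phi> g = (symdiff u u', 0)" using sur[OF Xc] by blast
    have sg: "snd g = 0" using ord[OF g(1)] g(2) by simp
    have "\<phi> (g \<otimes>\<^bsub>lamplighter\<^esub> ({}, a')) = \<phi> ({}, a)"
    proof -
      have "\<phi> (g \<otimes>\<^bsub>lamplighter\<^esub> ({}, a')) = (symdiff u u', 0) \<otimes>\<^bsub>lamplighter\<^esub> (u', B a')"
        using mul[OF g(1) tc] g(2) u' by simp
      moreover have "symdiff (symdiff u u') u' = u" unfolding symdiff_def by blast
      then have "(symdiff u u', 0) \<otimes>\<^bsub>lamplighter\<^esub> (u', B a') = (u, B a)"
        by (simp add: LL_mult eq)
      ultimately show ?thesis using u by simp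
    qed
    then have "g \<otimes>\<^bsub>lamplighter\<^esub> ({}, a') = ({}, a)" using inj[OF LL_closed[OF g(1) tc] tc] by simp
    then show "a = a'" using sg by (simp add: LL_mult)
  qed
  obtain g where g: "g \<in> carrier lamplighter" "\<phi> g = delta 0" using sur[OF dc] by blast
  have sg: "snd g = 0" using ord[OF g(1)] g(2) by (simp add: delta_def)
  have fg: "finite (fst g)" using g(1) by (simp add: LL_carrier)
  have "(fst g, 0) = g" using sg by (simp add: prod_eq_iff)
  then have "\<phi> (fst g, 0) = delta 0" using g(2) by simp
  then have "{z. odd (card {a\<in>fst g. z - B a \<in> P})} = {0}" using F[OF fg] by (simp add: delta_def)
  then have cP: "card P = 1" using unit_lemma[OF fg Binj fP] by simp
  then obtain c where c: "P = {c}" by (meson card_1_singletonE)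
  have dd: "\<And>a. \<phi> (delta a) = delta (B a + c)" using conj c by (simp add: delta_def)
  have "inj_on \<phi> (range delta)"
  proof (rule inj_on_subset[OF bij_betw_imp_inj_on[OF bij]])
    show "range delta \<subseteq> carrier lamplighter" using dc by blast
  qed
  moreover have "\<phi> ` range delta = range delta"
  proof
    show "\<phi> ` range delta \<subseteq> range delta" using dd by auto
    show "range delta \<subseteq> \<phi> ` range delta"
    proof
      fix d :: "'n lamp" assume "d \<in> range delta"
      then obtain z where z: "d = delta z" by blast
      obtain y where "B y = z - c" using Bsurj by blast
      then have "d = \<phi> (delta y)" using dd z by simp
      then show "d \<in> \<phi> ` range delta" by blast
    qed
  qed
  ultimately show ?thesis using cP d0 by (simp add: bij_betw_def)
qed

end
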